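(* For any family of policies $\Pi$, $\mathrm{PF}(\Pi)\subseteq \mathrm{DUS}(\Pi)$.
   Context: $\Pi$ is a family of policies of a multi-objective sequential decision problem with $d$ objectives; each $\pi\in\Pi$ has a random return vector $\mathbf{Z}^\pi\in\mathbb{R}^d$ (discounted sum of vector rewards) with finite expectation $\mathbf{V}^\pi=\mathbb{E}[\mathbf{Z}^\pi]$. For $\mathbf{x},\mathbf{y}\in\mathbb{R}^d$: $\mathbf{y}\preceq_p\mathbf{x}$ iff $y_i\le x_i$ for all $i$; $\mathbf{x}\succ_p\mathbf{y}$ iff $x_i\ge y_i$ for all $i$ and $x_i>y_i$ for some $i$. CDF: $F_{\mathbf{X}}(\mathbf{x})=P(\mathbf{X}\preceq_p\mathbf{x})$. $\mathbf{X}\succeq_{\mathrm{FSD}}\mathbf{Y}$ iff $F_{\mathbf{X}}\le F_{\mathbf{Y}}$ pointwise; $\mathbf{X}\succ_{\mathrm{FSD}}\mathbf{Y}$ iff additionally strict inequality at some point (same for real random variables). $\mathbf{X}\succ_d\mathbf{Y}$ (distributional dominance) iff $\mathbf{X}\succeq_{\mathrm{FSD}}\mathbf{Y}$ and $X_i\succ_{\mathrm{FSD}}Y_i$ for some marginal $i$. Pareto front: $\mathrm{PF}(\Pi)=\{\pi\in\Pi:\nexists\pi'\in\Pi,\ \mathbf{V}^{\pi'}\succ_p\mathbf{V}^\pi\}$. Distributional undominated set: $\mathrm{DUS}(\Pi)=\{\pi\in\Pi:\nexists\pi'\in\Pi,\ \mathbf{Z}^{\pi'}\succ_d\mathbf{Z}^\pi\}$.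 *)

theory Defs
  imports "HOL-Probability.Probability"
begin

definition pareto_le :: "real^'d \<Rightarrow> real^'d \<Rightarrow> bool" where
  "pareto_le y x \<longleftrightarrow> (\<forall>i. y $ i \<le> x $ i)"

definition pareto_dom :: "real^'d \<Rightarrow> real^'d \<Rightarrow> bool" where
  "pareto_dom x y \<longleftrightarrow> (\<forall>i. x $ i \<ge> y $ i) \<and> (\<exists>i. x $ i > y $ i)"

definition cdf_vec :: "'w measure \<Rightarrow> ('w \<Rightarrow> real^'d) \<Rightarrow> real^'d \<Rightarrow> real" where
  "cdf_vec M X x = measure M {w \<in> space M. pareto_le (X w) x}"

definition cdf_real :: "'w measure \<Rightarrow> ('w \<Rightarrow> real) \<Rightarrow> real \<Rightarrow> real" where
  "cdf_real M f t = measure M {w \<in> space M. f w \<le> t}"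

definition fsd_ge_vec :: "'w measure \<Rightarrow> ('w \<Rightarrow> real^'d) \<Rightarrow> 'w measure \<Rightarrow> ('w \<Rightarrow> real^'d) \<Rightarrow> bool" where
  "fsd_ge_vec M X N Y \<longleftrightarrow> (\<forall>x. cdf_vec M X x \<le> cdf_vec N Y x)"

definition fsd_strict_real :: "'w measure \<Rightarrow> ('w \<Rightarrow> real) \<Rightarrow> 'w measure \<Rightarrow> ('w \<Rightarrow> real) \<Rightarrow> bool" where
  "fsd_strict_real M f N g \<longleftrightarrow>
     (\<forall>t. cdf_real M f t \<le> cdf_real N g t) \<and> (\<exists>t. cdf_real M f t < cdf_real N g t)"

definition dist_dom :: "'w measure \<Rightarrow> ('w \<Rightarrow> real^'d) \<Rightarrow> 'w measure \<Rightarrow> ('w \<Rightarrow> real^'d) \<Rightarrow> bool" where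
  "dist_dom M X N Y \<longleftrightarrow> fsd_ge_vec M X N Y \<and>
     (\<exists>i. fsd_strict_real M (\<lambda>w. X w $ i) N (\<lambda>w. Y w $ i))"

definition value_vec :: "('p \<Rightarrow> 'w measure) \<Rightarrow> ('p \<Rightarrow> 'w \<Rightarrow> real^'d) \<Rightarrow> 'p \<Rightarrow> real^'d" where
  "value_vec M Z \<pi> = integral\<^sup>L (M \<pi>) (Z \<pi>)"

definition pareto_front :: "'p set \<Rightarrow> ('p \<Rightarrow> 'w measure) \<Rightarrow> ('p \<Rightarrow> 'w \<Rightarrow> real^'d) \<Rightarrow> 'p set" where
  "pareto_front Pols M Z = {\<pi> \<in> Pols. \<not> (\<exists>\<pi>'\<in>Pols. pareto_dom (value_vec M Z \<pi>') (value_vec M Z \<pi>))}"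

definition dus :: "'p set \<Rightarrow> ('p \<Rightarrow> 'w measure) \<Rightarrow> ('p \<Rightarrow> 'w \<Rightarrow> real^'d) \<Rightarrow> 'p set" where
  "dus Pols M Z = {\<pi> \<in> Pols. \<not> (\<exists>\<pi>'\<in>Pols. dist_dom (M \<pi>') (Z \<pi>') (M \<pi>) (Z \<pi>))}"

end

theory Submission
  imports Defs
begin

lemma ind_meas_Ico:
  fixes f :: "'a \<Rightarrow> real"
  assumes "f \<in> borel_measurable M"
  shows "(\<lambda>(x,t). indicator {0..<f x} t :: ennreal) \<in> borel_measurable (M \<Otimes>\<^sub>M lborel)"
proof -
  have "(\<lambda>(x,t). indicator {0..<f x} t :: ennreal) = (\<lambda>p. if 0 \<le> snd p \<and> snd p < f (fst p) then 1 else 0)"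
    by (auto simp: indicator_def fun_eq_iff)
  also have "\<dots> \<in> borel_measurable (M \<Otimes>\<^sub>M lborel)" using assms by measurable
  finally show ?thesis .
qed

lemma ind_meas_Ioc:
  fixes f :: "'a \<Rightarrow> real"
  assumes "f \<in> borel_measurable M"
  shows "(\<lambda>(x,t). indicator {0<..f x} t :: ennreal) \<in> borel_measurable (M \<Otimes>\<^sub>M lborel)"
proof -
  have "(\<lambda>(x,t). indicator {0<..f x} t :: ennreal) = (\<lambda>p. if 0 < snd p \<and> snd p \<le> f (fst p) then 1 else 0)"
    by (auto simp: indicator_def fun_eq_iff)
  also have "\<dots> \<in> borel_measurable (M \<Otimes>\<^sub>M lborel)" using assms by measurable
  finally show ?thesis .
qed

lemma emeasure_as_int_Ico:
  fixes f :: "'a \<Rightarrow> real"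
  assumes "f \<in> borel_measurable M"
  shows "emeasure M {x\<in>space M. 0 \<le> t \<and> t < f x} = (\<integral>\<^sup>+x. indicator {0..<f x} t \<partial>M)"
proof -
  have "(\<integral>\<^sup>+x. indicator {0..<f x} t \<partial>M) = (\<integral>\<^sup>+x. indicator {x\<in>space M. 0 \<le> t \<and> t < f x} x \<partial>M)"
    by (rule nn_integral_cong) (auto simp: indicator_def)
  also have "\<dots> = emeasure M {x\<in>space M. 0 \<le> t \<and> t < f x}"
    by (rule nn_integral_indicator) (use assms in measurable)
  finally show ?thesis by simp
qed

lemma emeasure_as_int_Ioc:
  fixes f :: "'a \<Rightarrow> real"
  assumes "f \<in> borel_measurable M"
  shows "emeasure M {x\<in>space M. 0 < t \<and> t \<le> f x} = (\<integral>\<^sup>+x. indicator {0<..f x} t \<partial>M)"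
proof -
  have "(\<integral>\<^sup>+x. indicator {0<..f x} t \<partial>M) = (\<integral>\<^sup>+x. indicator {x\<in>space M. 0 < t \<and> t \<le> f x} x \<partial>M)"
    by (rule nn_integral_cong) (auto simp: indicator_def)
  also have "\<dots> = emeasure M {x\<in>space M. 0 < t \<and> t \<le> f x}"
    by (rule nn_integral_indicator) (use assms in measurable)
  finally show ?thesis by simp
qed

lemma layer_pos:
  fixes f :: "'a \<Rightarrow> real"
  assumes "finite_measure M" "f \<in> borel_measurable M"
  shows "(\<integral>\<^sup>+x. ennreal (max (f x) 0) \<partial>M) = (\<integral>\<^sup>+t. emeasure M {x\<in>space M. 0 \<le> t \<and> t < f x} \<partial>lborel)"
proof -
  interpret finite_measure M by fact
  interpret P: pair_sigma_finite M lborel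
    unfolding pair_sigma_finite_def using sigma_finite_measure_axioms sigma_finite_lborel by simp
  have 1: "ennreal (max (f x) 0) = (\<integral>\<^sup>+t. indicator {0..<f x} t \<partial>lborel)" for x
    by (cases "f x \<ge> 0") auto
  show ?thesis unfolding 1 emeasure_as_int_Ico[OF assms(2)]
    using P.Fubini'[OF ind_meas_Ico[OF assms(2)]] by simp
qed

lemma layer_pos':
  fixes f :: "'a \<Rightarrow> real"
  assumes "finite_measure M" "f \<in> borel_measurable M"
  shows "(\<integral>\<^sup>+x. ennreal (max (f x) 0) \<partial>M) = (\<integral>\<^sup>+t. emeasure M {x\<in>space M. 0 < t \<and> t \<le> f x} \<partial>lborel)"
proof -
  interpret finite_measure M by fact
  interpret P: pair_sigma_finite M lborel
    unfolding pair_sigma_finite_def using sigma_finite_measure_axioms sigma_finite_lborel by simp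
  have 1: "ennreal (max (f x) 0) = (\<integral>\<^sup>+t. indicator {0<..f x} t \<partial>lborel)" for x
    by (cases "f x \<ge> 0") auto
  show ?thesis unfolding 1 emeasure_as_int_Ioc[OF assms(2)]
    using P.Fubini'[OF ind_meas_Ioc[OF assms(2)]] by simp
qed

lemma meas_h:
  fixes f :: "'a \<Rightarrow> real"
  assumes "finite_measure M" "f \<in> borel_measurable M"
  shows "(\<lambda>t. emeasure M {x\<in>space M. 0 \<le> t \<and> t < f x}) \<in> borel_measurable lborel"
proof -
  interpret finite_measure M by fact
  have "(\<lambda>(t,x). indicator {0..<f x} t :: ennreal) = (\<lambda>p. if 0 \<le> fst p \<and> fst p < f (snd p) then 1 else 0)"
    by (auto simp: indicator_def fun_eq_iff)
  also have "\<dots> \<in> borel_measurable (lborel \<Otimes>\<^sub>M M)" using assms(2) by measurable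
  finally have m: "(\<lambda>(t,x). indicator {0..<f x} t :: ennreal) \<in> borel_measurable (lborel \<Otimes>\<^sub>M M)" .
  show ?thesis unfolding emeasure_as_int_Ico[OF assms(2)]
    using borel_measurable_nn_integral[OF m] by simp
qed

lemma hform:
  fixes f :: "'a \<Rightarrow> real"
  assumes "prob_space M" "f \<in> borel_measurable M" "0 \<le> t"
  shows "emeasure M {x\<in>space M. 0 \<le> t \<and> t < f x} = ennreal (1 - cdf_real M f t)"
proof -
  interpret prob_space M by fact
  have "{x\<in>space M. 0 \<le> t \<and> t < f x} = space M - {x\<in>space M. f x \<le> t}" using assms(3) by auto
  moreover have "{x\<in>space M. f x \<le> t} \<in> sets M" using assms(2) by measurable
  ultimately show ?thesis unfolding cdf_real_def
    by (simp add: emeasure_eq_measure prob_compl)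
qed

lemma kform:
  fixes f :: "'a \<Rightarrow> real"
  assumes "prob_space M" "f \<in> borel_measurable M" "0 < t"
  shows "emeasure M {x\<in>space M. 0 < t \<and> t \<le> - f x} = ennreal (cdf_real M f (-t))"
proof -
  interpret prob_space M by fact
  have "{x\<in>space M. 0 < t \<and> t \<le> - f x} = {x\<in>space M. f x \<le> -t}" using assms(3) by auto
  then show ?thesis unfolding cdf_real_def
    by (simp add: emeasure_eq_measure)
qed

lemma cdf_le1:
  assumes "prob_space M"
  shows "cdf_real M f t \<le> 1"
  unfolding cdf_real_def using prob_space.prob_le_1[OF assms] .

lemma cdf_right:
  fixes f :: "'a \<Rightarrow> real"
  assumes "prob_space M" "f \<in> borel_measurable M" "0 < e"
  shows "\<exists>b>0. \<forall>t. 0 \<le> t \<and> t < b \<longrightarrow> cdf_real M f t < cdf_real M f 0 + e"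
proof -
  interpret prob_space M by fact
  let ?D = "distr M borel f"
  interpret D: real_distribution ?D using assms(2) by simp
  have eq: "cdf ?D t = cdf_real M f t" for t
    unfolding cdf_def cdf_real_def using assms(2)
    by (simp add: measure_distr vimage_def Int_def conj_commute)
  have "continuous (at_right 0) (cdf ?D)" by (rule D.cdf_is_right_cont)
  then have "(cdf ?D \<longlongrightarrow> cdf ?D 0) (at_right 0)"
    by (simp add: continuous_within)
  then have "eventually (\<lambda>t. cdf ?D t < cdf ?D 0 + e) (at_right 0)"
    using assms(3) by (intro order_tendstoD(2)) auto
  then obtain b where b: "b > 0" "\<And>y. y > 0 \<Longrightarrow> y < b \<Longrightarrow> cdf ?D y < cdf ?D 0 + e"
    unfolding eventually_at_right_field by auto
  show ?thesis
  proof (intro exI[of _ b] conjI allI impI)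
    fix t :: real assume t: "0 \<le> t \<and> t < b"
    show "cdf_real M f t < cdf_real M f 0 + e"
    proof (cases "t = 0")
      case True then show ?thesis using assms(3) by simp
    next
      case False then show ?thesis using b(2)[of t] t unfolding eq by auto
    qed
  qed (use b in auto)
qed

lemma split_int:
  fixes f :: "'a \<Rightarrow> real"
  assumes "integrable M f"
  shows "integral\<^sup>L M f = integral\<^sup>L M (\<lambda>x. max (f x) 0) - integral\<^sup>L M (\<lambda>x. max (- f x) 0)"
proof -
  have "integral\<^sup>L M f = integral\<^sup>L M (\<lambda>x. max (f x) 0 - max (- f x) 0)"
    by (rule Bochner_Integration.integral_cong) auto
  also have "\<dots> = integral\<^sup>L M (\<lambda>x. max (f x) 0) - integral\<^sup>L M (\<lambda>x. max (- f x) 0)"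
    using assms by (intro Bochner_Integration.integral_diff integrable_max) auto
  finally show ?thesis .
qed

lemma core:
  fixes f g :: "'a \<Rightarrow> real"
  assumes pM: "prob_space M" and pN: "prob_space N" and iM: "integrable M f" and iN: "integrable N g"
    and le: "\<And>t. cdf_real M f t \<le> cdf_real N g t"
  shows "integral\<^sup>L N g \<le> integral\<^sup>L M f"
    and "cdf_real M f 0 < cdf_real N g 0 \<Longrightarrow> integral\<^sup>L N g < integral\<^sup>L M f"
proof -
  interpret M: prob_space M by fact
  interpret N: prob_space N by fact
  have fm[measurable]: "f \<in> borel_measurable M" using iM by auto
  have gm[measurable]: "g \<in> borel_measurable N" using iN by auto
  have fmm: "(\<lambda>x. - f x) \<in> borel_measurable M" by measurable
  have gmm: "(\<lambda>x. - g x) \<in> borel_measurable N" by measurable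
  define hM where "hM t = emeasure M {x\<in>space M. 0 \<le> t \<and> t < f x}" for t
  define hN where "hN t = emeasure N {x\<in>space N. 0 \<le> t \<and> t < g x}" for t
  define kM where "kM t = emeasure M {x\<in>space M. 0 < t \<and> t \<le> - f x}" for t
  define kN where "kN t = emeasure N {x\<in>space N. 0 < t \<and> t \<le> - g x}" for t
  define PM where "PM = integral\<^sup>L M (\<lambda>x. max (f x) 0)"
  define PN where "PN = integral\<^sup>L N (\<lambda>x. max (g x) 0)"
  define QM where "QM = integral\<^sup>L M (\<lambda>x. max (- f x) 0)"
  define QN where "QN = integral\<^sup>L N (\<lambda>x. max (- g x) 0)"
  have PMe: "ennreal PM = (\<integral>\<^sup>+t. hM t \<partial>lborel)"
    unfolding PM_def hM_def
    using layer_pos[OF M.finite_measure_axioms fm] nn_integral_eq_integral[of M "\<lambda>x. max (f x) 0"] iM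
    by (simp add: integrable_max)
  have PNe: "ennreal PN = (\<integral>\<^sup>+t. hN t \<partial>lborel)"
    unfolding PN_def hN_def
    using layer_pos[OF N.finite_measure_axioms gm] nn_integral_eq_integral[of N "\<lambda>x. max (g x) 0"] iN
    by (simp add: integrable_max)
  have QMe: "ennreal QM = (\<integral>\<^sup>+t. kM t \<partial>lborel)"
    unfolding QM_def kM_def
    using layer_pos'[OF M.finite_measure_axioms fmm] nn_integral_eq_integral[of M "\<lambda>x. max (- f x) 0"] iM
    by (simp add: integrable_max)
  have QNe: "ennreal QN = (\<integral>\<^sup>+t. kN t \<partial>lborel)"
    unfolding QN_def kN_def
    using layer_pos'[OF N.finite_measure_axioms gmm] nn_integral_eq_integral[of N "\<lambda>x. max (- g x) 0"] iN
    by (simp add: integrable_max)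
  have nn: "PM \<ge> 0" "PN \<ge> 0" "QM \<ge> 0" "QN \<ge> 0"
    unfolding PM_def PN_def QM_def QN_def by (auto intro!: integral_nonneg_AE)
  have hle: "hN t \<le> hM t" for t
  proof (cases "t \<ge> 0")
    case True
    then show ?thesis unfolding hM_def hN_def
      using hform[OF pM fm True] hform[OF pN gm True] le[of t] by (simp add: ennreal_leI)
  next
    case False then show ?thesis unfolding hM_def hN_def by simp
  qed
  have kle: "kM t \<le> kN t" for t
  proof (cases "t > 0")
    case True
    then show ?thesis unfolding kM_def kN_def
      using kform[OF pM fm True] kform[OF pN gm True] le[of "-t"] by (simp add: ennreal_leI)
  next
    case False then show ?thesis unfolding kM_def kN_def by simp
  qed
  have "ennreal PN \<le> ennreal PM" unfolding PMe PNe by (intro nn_integral_mono hle)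
  then have P: "PN \<le> PM" using nn by simp
  have "ennreal QM \<le> ennreal QN" unfolding QMe QNe by (intro nn_integral_mono kle)
  then have Q: "QM \<le> QN" using nn by simp
  have eqM: "integral\<^sup>L M f = PM - QM" unfolding PM_def QM_def by (rule split_int[OF iM])
  have eqN: "integral\<^sup>L N g = PN - QN" unfolding PN_def QN_def by (rule split_int[OF iN])
  show "integral\<^sup>L N g \<le> integral\<^sup>L M f" unfolding eqM eqN using P Q by simp
  assume c0: "cdf_real M f 0 < cdf_real N g 0"
  define e where "e = (cdf_real N g 0 - cdf_real M f 0) / 2"
  have e: "e > 0" using c0 unfolding e_def by simp
  obtain b where b: "b > 0" "\<And>t. 0 \<le> t \<Longrightarrow> t < b \<Longrightarrow> cdf_real M f t < cdf_real M f 0 + e"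
    using cdf_right[OF pM fm e] by auto
  have mono_N: "cdf_real N g 0 \<le> cdf_real N g t" if "0 \<le> t" for t
    unfolding cdf_real_def using that
    by (intro N.finite_measure_mono) auto
  have hstrict: "hN t + ennreal e * indicator {0..<b} t \<le> hM t" for t
  proof (cases "0 \<le> t \<and> t < b")
    case True
    have a1: "cdf_real M f t + e \<le> cdf_real N g t"
    proof -
      have x1: "cdf_real M f t < cdf_real M f 0 + e" using b(2)[of t] True by auto
      have x2: "cdf_real N g 0 \<le> cdf_real N g t" using mono_N[of t] True by auto
      have x3: "2 * e = cdf_real N g 0 - cdf_real M f 0" unfolding e_def by simp
      show ?thesis using x1 x2 x3 by linarith
    qed
    have "hN t + ennreal e * indicator {0..<b} t = ennreal (1 - cdf_real N g t + e)"
      unfolding hN_def using True hform[OF pN gm, of t] cdf_le1[OF pN] e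
      by (simp add: ennreal_plus)
    also have "\<dots> \<le> ennreal (1 - cdf_real M f t)" using a1 by (intro ennreal_leI) simp
    also have "\<dots> = hM t" unfolding hM_def using True hform[OF pM fm, of t] by simp
    finally show ?thesis .
  next
    case False then show ?thesis using hle[of t] by simp
  qed
  have hNm: "hN \<in> borel_measurable lborel"
    unfolding hN_def[abs_def] by (rule meas_h[OF N.finite_measure_axioms gm])
  have "(\<integral>\<^sup>+t. hN t + ennreal e * indicator {0..<b} t \<partial>lborel)
      = (\<integral>\<^sup>+t. hN t \<partial>lborel) + (\<integral>\<^sup>+t. ennreal e * indicator {0..<b} t \<partial>lborel)"
    using hNm by (intro nn_integral_add) auto
  also have "(\<integral>\<^sup>+t. ennreal e * indicator {0..<b} t \<partial>lborel) = ennreal (e * b)"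
    using b e by (simp add: nn_integral_cmult_indicator ennreal_mult)
  finally have s1: "(\<integral>\<^sup>+t. hN t + ennreal e * indicator {0..<b} t \<partial>lborel) = ennreal PN + ennreal (e * b)"
    unfolding PNe .
  have s2: "(\<integral>\<^sup>+t. hN t + ennreal e * indicator {0..<b} t \<partial>lborel) \<le> (\<integral>\<^sup>+t. hM t \<partial>lborel)"
    by (rule nn_integral_mono) (rule hstrict)
  have "ennreal PN + ennreal (e * b) \<le> ennreal PM"
    using s1 s2 PMe by simp
  moreover have "ennreal (PN + e * b) = ennreal PN + ennreal (e * b)"
    using nn e b by (intro ennreal_plus) auto
  ultimately have "ennreal (PN + e * b) \<le> ennreal PM" by simp
  then have "PN + e * b \<le> PM" using nn(1) by (simp add: ennreal_le_iff)
  moreover have "e * b > 0" using e b by simp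
  ultimately have "PN < PM" by linarith
  then show "integral\<^sup>L N g < integral\<^sup>L M f" unfolding eqM eqN using Q by simp
qed

lemma comp_meas:
  fixes X :: "'w \<Rightarrow> real^'d"
  assumes "X \<in> borel_measurable M"
  shows "(\<lambda>w. X w $ j) \<in> borel_measurable M"
proof -
  interpret T: bounded_linear "\<lambda>v::real^'d. v $ j" by (rule bounded_linear_vec_nth)
  have "(\<lambda>v::real^'d. v $ j) \<in> borel_measurable borel"
    by (intro borel_measurable_continuous_onI T.continuous_on continuous_on_id)
  from measurable_compose[OF assms this] show ?thesis .
qed


lemma marginal:
  fixes X Y :: "'w \<Rightarrow> real^'d"
  assumes pM: "prob_space M" and pN: "prob_space N"
    and mX: "X \<in> borel_measurable M" and mY: "Y \<in> borel_measurable N"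
    and fsd: "fsd_ge_vec M X N Y"
  shows "cdf_real M (\<lambda>w. X w $ j) t \<le> cdf_real N (\<lambda>w. Y w $ j) t"
proof -
  interpret M: prob_space M by fact
  interpret N: prob_space N by fact
  define c where "c n = (\<chi> k. if k = j then t else real n)" for n :: nat
  define A where "A n = {w\<in>space M. pareto_le (X w) (c n)}" for n
  define B where "B n = {w\<in>space N. pareto_le (Y w) (c n)}" for n
  have setsA: "range A \<subseteq> sets M"
  proof -
    have "A n \<in> sets M" for n
    proof -
      have "A n = (\<Inter>i. {w\<in>space M. X w $ i \<le> c n $ i}) \<inter> space M"
        unfolding A_def pareto_le_def by auto
      also have "\<dots> \<in> sets M" using mX by measurable
      finally show ?thesis .
    qed
    then show ?thesis by auto
  qed
  have setsB: "range B \<subseteq> sets N"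
  proof -
    have "B n \<in> sets N" for n
    proof -
      have "B n = (\<Inter>i. {w\<in>space N. Y w $ i \<le> c n $ i}) \<inter> space N"
        unfolding B_def pareto_le_def by auto
      also have "\<dots> \<in> sets N" using mY by measurable
      finally show ?thesis .
    qed
    then show ?thesis by auto
  qed
  have cmono: "pareto_le v (c n) \<Longrightarrow> n \<le> m \<Longrightarrow> pareto_le v (c m)" for v n m
    unfolding pareto_le_def c_def by (auto intro: order_trans)
  have incA: "incseq A" unfolding incseq_def A_def using cmono by auto
  have incB: "incseq B" unfolding incseq_def B_def using cmono by auto
  have big: "pareto_le v (c (nat \<lceil>norm v\<rceil>))" if "v $ j \<le> t" for v :: "real^'d"
    unfolding pareto_le_def c_def
  proof
    fix i
    have "v $ i \<le> norm v" using component_le_norm_cart[of v i] by linarith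
    also have "\<dots> \<le> real (nat \<lceil>norm v\<rceil>)" by linarith
    finally show "v $ i \<le> (\<chi> k. if k = j then t else real (nat \<lceil>norm v\<rceil>)) $ i"
      using that by auto
  qed
  have small: "pareto_le v (c n) \<Longrightarrow> v $ j \<le> t" for v n
    unfolding pareto_le_def c_def by (drule spec[of _ j]) simp
  have UA: "(\<Union>n. A n) = {w\<in>space M. X w $ j \<le> t}"
    unfolding A_def using big small by auto
  have UB: "(\<Union>n. B n) = {w\<in>space N. Y w $ j \<le> t}"
    unfolding B_def using big small by auto
  have LA: "(\<lambda>n. measure M (A n)) \<longlonglongrightarrow> cdf_real M (\<lambda>w. X w $ j) t"
    using M.finite_Lim_measure_incseq[OF setsA incA] unfolding UA cdf_real_def .
  have LB: "(\<lambda>n. measure N (B n)) \<longlonglongrightarrow> cdf_real N (\<lambda>w. Y w $ j) t"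
    using N.finite_Lim_measure_incseq[OF setsB incB] unfolding UB cdf_real_def .
  have "measure M (A n) \<le> measure N (B n)" for n
    using fsd unfolding fsd_ge_vec_def cdf_vec_def A_def B_def by simp
  then show ?thesis using LIMSEQ_le[OF LA LB] by auto
qed

lemma strict_exp:
  fixes f g :: "'a \<Rightarrow> real"
  assumes pM: "prob_space M" and pN: "prob_space N" and iM: "integrable M f" and iN: "integrable N g"
    and le: "\<And>t. cdf_real M f t \<le> cdf_real N g t"
    and lt: "cdf_real M f t0 < cdf_real N g t0"
  shows "integral\<^sup>L N g < integral\<^sup>L M f"
proof -
  interpret M: prob_space M by fact
  interpret N: prob_space N by fact
  have sh: "cdf_real K (\<lambda>x. h x - t0) s = cdf_real K h (s + t0)" for K and h :: "'a \<Rightarrow> real" and s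
    unfolding cdf_real_def by (rule arg_cong[where f="measure K"]) auto
  have iM': "integrable M (\<lambda>x. f x - t0)" using iM by auto
  have iN': "integrable N (\<lambda>x. g x - t0)" using iN by auto
  have "integral\<^sup>L N (\<lambda>x. g x - t0) < integral\<^sup>L M (\<lambda>x. f x - t0)"
    by (rule core(2)[OF pM pN iM' iN']) (use le lt in \<open>auto simp: sh\<close>)
  moreover have "integral\<^sup>L N (\<lambda>x. g x - t0) = integral\<^sup>L N g - t0"
    using iN by (simp add: Bochner_Integration.integral_diff N.prob_space)
  moreover have "integral\<^sup>L M (\<lambda>x. f x - t0) = integral\<^sup>L M f - t0"
    using iM by (simp add: Bochner_Integration.integral_diff M.prob_space)
  ultimately show ?thesis by simp
qed


lemma value_comp:
  fixes Z :: "'p \<Rightarrow> 'w \<Rightarrow> real^'d"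
  assumes "integrable (M p) (Z p)"
  shows "value_vec M Z p $ j = integral\<^sup>L (M p) (\<lambda>w. Z p w $ j)"
  unfolding value_vec_def
  using integral_bounded_linear[OF bounded_linear_vec_nth assms, of j] by simp

theorem corollary4p1p1:
  fixes Pols :: "'p set" and M :: "'p \<Rightarrow> 'w measure" and Z :: "'p \<Rightarrow> 'w \<Rightarrow> real^'d"
  assumes "\<And>\<pi>. \<pi> \<in> Pols \<Longrightarrow> prob_space (M \<pi>)"
      and "\<And>\<pi>. \<pi> \<in> Pols \<Longrightarrow> Z \<pi> \<in> borel_measurable (M \<pi>)"
      and "\<And>\<pi>. \<pi> \<in> Pols \<Longrightarrow> integrable (M \<pi>) (Z \<pi>)"
  shows "pareto_front Pols M Z \<subseteq> dus Pols M Z"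
proof
  fix p assume pf: "p \<in> pareto_front Pols M Z"
  then have p: "p \<in> Pols" and nd: "\<And>q. q \<in> Pols \<Longrightarrow> \<not> pareto_dom (value_vec M Z q) (value_vec M Z p)"
    unfolding pareto_front_def by auto
  show "p \<in> dus Pols M Z"
    unfolding dus_def
  proof (intro CollectI conjI p notI)
    assume "\<exists>q\<in>Pols. dist_dom (M q) (Z q) (M p) (Z p)"
    then obtain q where q: "q \<in> Pols" and dd: "dist_dom (M q) (Z q) (M p) (Z p)" by blast
    from dd have fsd: "fsd_ge_vec (M q) (Z q) (M p) (Z p)"
      and "\<exists>i. fsd_strict_real (M q) (\<lambda>w. Z q w $ i) (M p) (\<lambda>w. Z p w $ i)"
      unfolding dist_dom_def by auto
    then obtain i where si: "fsd_strict_real (M q) (\<lambda>w. Z q w $ i) (M p) (\<lambda>w. Z p w $ i)" by blast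
    have intq: "integrable (M q) (\<lambda>w. Z q w $ j)" for j
      using integrable_bounded_linear[OF bounded_linear_vec_nth assms(3)[OF q]] by simp
    have intp: "integrable (M p) (\<lambda>w. Z p w $ j)" for j
      using integrable_bounded_linear[OF bounded_linear_vec_nth assms(3)[OF p]] by simp
    have mle: "cdf_real (M q) (\<lambda>w. Z q w $ j) t \<le> cdf_real (M p) (\<lambda>w. Z p w $ j) t" for j t
      by (rule marginal[OF assms(1)[OF q] assms(1)[OF p] assms(2)[OF q] assms(2)[OF p] fsd])
    have "value_vec M Z p $ j \<le> value_vec M Z q $ j" for j
      unfolding value_comp[where M=M and Z=Z and p=q, OF assms(3)[OF q]] value_comp[where M=M and Z=Z and p=p, OF assms(3)[OF p]]
      by (rule core(1)[OF assms(1)[OF q] assms(1)[OF p] intq intp mle])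
    moreover have "value_vec M Z p $ i < value_vec M Z q $ i"
    proof -
      from si obtain t0 where t0: "cdf_real (M q) (\<lambda>w. Z q w $ i) t0 < cdf_real (M p) (\<lambda>w. Z p w $ i) t0"
        unfolding fsd_strict_real_def by blast
      show ?thesis
        unfolding value_comp[where M=M and Z=Z and p=q, OF assms(3)[OF q]] value_comp[where M=M and Z=Z and p=p, OF assms(3)[OF p]]
        by (rule strict_exp[OF assms(1)[OF q] assms(1)[OF p] intq intp mle t0])
    qed
    ultimately have "pareto_dom (value_vec M Z q) (value_vec M Z p)"
      unfolding pareto_dom_def by auto
    with nd[OF q] show False by simp
  qed
qed

end
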